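(* Let $n, r$ be positive integers and let $G$ be a graph all of whose vertices have degree at least $r$. Then $$m_e(G\square K_n, r)\leqslant\sum_{t=0}^{n-1} m_e(G, r-t),$$ where $m_e(G, i)$ is defined to be $0$ if $i\leqslant0$.
   Context: All graphs are finite, simple and undirected; $K_n$ is the complete graph on $n$ vertices. The Cartesian product $G\square H$ has vertex set $V(G)\times V(H)$, with $(g_1,h_1)$ adjacent to $(g_2,h_2)$ iff either $g_1=g_2$ and $h_1h_2\in E(H)$, or $h_1=h_2$ and $g_1g_2\in E(G)$. Given graphs $G$ and $H$, the $H$-bootstrap percolation process on $G$ starts with a set $E_0\subseteq E(G)$ of initially activated edges, and for $i\geqslant1$, $E_i$ consists of $E_{i-1}$ together with all edges $e\in E(G)$ for which there is a subgraph $H_e$ of $G$ isomorphic to $H$ with $e\in E(H_e)$ and $E(H_e)\setminus\{e\}\subseteq E_{i-1}$. $E_0$ is a percolating set if $\bigcup_{i\geqslant0}E_i=E(G)$; $\mathrm{wsat}(G,H)$ is the minimum size of a percolating set. $m_e(G,r)=\mathrm{wsat}(G,S_{r+1})$, where $S_{r+1}$ is the star on $r+2$ vertices. *)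

theory Defs
  imports Main
begin

type_synonym 'a graph = "'a set \<times> 'a set set"

definition verts :: "'a graph \<Rightarrow> 'a set" where "verts G = fst G"
definition edges :: "'a graph \<Rightarrow> 'a set set" where "edges G = snd G"

definition is_graph :: "'a graph \<Rightarrow> bool" where
  "is_graph G \<longleftrightarrow> finite (verts G) \<and>
     edges G \<subseteq> {{x, y} | x y. x \<in> verts G \<and> y \<in> verts G \<and> x \<noteq> y}"

definition degree :: "'a graph \<Rightarrow> 'a \<Rightarrow> nat" where
  "degree G v = card {e \<in> edges G. v \<in> e}"

definition complete_graph :: "nat \<Rightarrow> nat graph" where
  "complete_graph n = ({0..<n}, {{i, j} | i j. i < n \<and> j < n \<and> i \<noteq> j})"

definition cart_prod :: "'a graph \<Rightarrow> 'b graph \<Rightarrow> ('a \<times> 'b) graph" where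
  "cart_prod G H = (verts G \<times> verts H,
     {{(g, h1), (g, h2)} | g h1 h2. g \<in> verts G \<and> {h1, h2} \<in> edges H} \<union>
     {{(g1, h), (g2, h)} | g1 g2 h. h \<in> verts H \<and> {g1, g2} \<in> edges G})"

text \<open>Star S_{r+1}: centre 0 and leaves 1..r+1 (r+2 vertices).\<close>
definition star :: "nat \<Rightarrow> nat graph" where
  "star r = ({0..Suc r}, {{0, i} | i. 1 \<le> i \<and> i \<le> Suc r})"

text \<open>Edge sets of subgraphs of G isomorphic to H (given by an injective vertex map
  sending edges to edges; the subgraph's edge set is the image of E(H)).\<close>
definition copies :: "'a graph \<Rightarrow> 'b graph \<Rightarrow> 'a set set set" where
  "copies G H = {(\<lambda>h. f ` h) ` edges H | f. inj_on f (verts H) \<and> f ` verts H \<subseteq> verts G \<and>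
                   (\<forall>h \<in> edges H. f ` h \<in> edges G)}"

definition boot_step :: "'a graph \<Rightarrow> 'b graph \<Rightarrow> 'a set set \<Rightarrow> 'a set set" where
  "boot_step G H A = A \<union> {e \<in> edges G. \<exists>F \<in> copies G H. e \<in> F \<and> F - {e} \<subseteq> A}"

definition percolates :: "'a graph \<Rightarrow> 'b graph \<Rightarrow> 'a set set \<Rightarrow> bool" where
  "percolates G H A \<longleftrightarrow> (\<Union>i. (boot_step G H ^^ i) A) = edges G"

definition wsat :: "'a graph \<Rightarrow> 'b graph \<Rightarrow> nat" where
  "wsat G H = (LEAST k. \<exists>A. A \<subseteq> edges G \<and> percolates G H A \<and> card A = k)"

definition m_e :: "'a graph \<Rightarrow> int \<Rightarrow> nat" where
  "m_e G i = (if i \<le> 0 then 0 else wsat G (star (nat i)))"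

end

theory Submission
  imports Defs
begin


inductive_set cl :: "'a graph \<Rightarrow> nat \<Rightarrow> 'a set set \<Rightarrow> 'a set set" for G k A where
  base: "e \<in> A \<Longrightarrow> e \<in> cl G k A"
| step: "e \<in> edges G \<Longrightarrow> v \<in> e \<Longrightarrow> \<forall>s\<in>S. s \<in> cl G k A \<Longrightarrow> finite S \<Longrightarrow> k \<le> card S
     \<Longrightarrow> (\<forall>s\<in>S. s \<in> edges G \<and> v \<in> s) \<Longrightarrow> e \<notin> S \<Longrightarrow> e \<in> cl G k A"

lemma star_edges: "edges (star k) = (\<lambda>i. {0, i}) ` {1..Suc k}"
  by (auto simp: star_def edges_def)

lemma star_verts: "verts (star k) = {0..Suc k}"
  by (auto simp: star_def verts_def)

lemma iter_sub_cl: "(boot_step G (star k) ^^ i) A \<subseteq> cl G k A"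
proof (induction i)
  case 0
  then show ?case by (auto intro: cl.base)
next
  case (Suc i)
  let ?X = "(boot_step G (star k) ^^ i) A"
  show ?case
  proof
    fix e assume "e \<in> (boot_step G (star k) ^^ Suc i) A"
    then have "e \<in> ?X \<or> (e \<in> edges G \<and> (\<exists>F \<in> copies G (star k). e \<in> F \<and> F - {e} \<subseteq> ?X))"
      by (simp add: boot_step_def)
    then show "e \<in> cl G k A"
    proof
      assume "e \<in> ?X" then show ?thesis using Suc by blast
    next
      assume "e \<in> edges G \<and> (\<exists>F \<in> copies G (star k). e \<in> F \<and> F - {e} \<subseteq> ?X)"
      then obtain F where eG: "e \<in> edges G" and F: "F \<in> copies G (star k)" "e \<in> F" "F - {e} \<subseteq> ?X"
        by blast
      from F(1) obtain f where Fd: "F = (\<lambda>h. f ` h) ` edges (star k)"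
        and inj: "inj_on f {0..Suc k}" and fe: "\<forall>h \<in> edges (star k). f ` h \<in> edges G"
        by (auto simp: copies_def star_verts)
      have F2: "F = (\<lambda>i. {f 0, f i}) ` {1..Suc k}"
        unfolding Fd star_edges image_image by simp
      have inj2: "inj_on (\<lambda>i. {f 0, f i}) {1..Suc k}"
      proof (rule inj_onI)
        fix i j assume ij: "i \<in> {1..Suc k}" "j \<in> {1..Suc k}" "{f 0, f i} = {f 0, f j}"
        then have "f i = f j \<or> f j = f 0" by (auto simp: doubleton_eq_iff)
        then show "i = j" using inj ij(1,2) unfolding inj_on_def
          by (metis atLeastAtMost_iff le0 le_SucI not_one_le_zero)
      qed
      have cF: "card F = Suc k" using inj2 F2 by (simp add: card_image)
      have fin: "finite F" using F2 by simp
      let ?S = "F - {e}"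
      have cS: "card ?S = k" using cF F(2) fin by simp
      have allS: "\<forall>s\<in>?S. s \<in> edges G \<and> f 0 \<in> s"
        using fe F2 star_edges Fd by auto
      have "f 0 \<in> e" using F(2) F2 by auto
      moreover have "\<forall>s\<in>?S. s \<in> cl G k A" using F(3) Suc by blast
      ultimately show ?thesis
        using cl.step[OF eG _ _ _ _ allS] cS fin by auto
    qed
  qed
qed

lemma boot_step_incr: "X \<subseteq> boot_step G H X"
  by (auto simp: boot_step_def)

lemma iter_mono: "i \<le> j \<Longrightarrow> (boot_step G H ^^ i) A \<subseteq> (boot_step G H ^^ j) A"
proof (induction j)
  case 0 then show ?case by simp
next
  case (Suc j)
  then show ?case using boot_step_incr[of "(boot_step G H ^^ j) A" G H]
    by (metis funpow.simps(2) comp_apply le_Suc_eq order_trans order_refl)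
qed

lemma finite_in_iter:
  "finite S \<Longrightarrow> S \<subseteq> (\<Union>i. (boot_step G H ^^ i) A) \<Longrightarrow> \<exists>i. S \<subseteq> (boot_step G H ^^ i) A"
proof (induction S rule: finite_induct)
  case empty then show ?case by simp
next
  case (insert x S)
  then obtain i where i: "S \<subseteq> (boot_step G H ^^ i) A" by auto
  from insert obtain j where j: "x \<in> (boot_step G H ^^ j) A" by auto
  have "insert x S \<subseteq> (boot_step G H ^^ (max i j)) A"
    using i j iter_mono[of i "max i j" G H A] iter_mono[of j "max i j" G H A] by auto
  then show ?case by blast
qed

lemma cl_sub_iter:
  assumes wf: "\<forall>s\<in>edges G. \<exists>x y. s = {x,y} \<and> x \<noteq> y \<and> x \<in> verts G \<and> y \<in> verts G"
  shows "e \<in> cl G k A \<Longrightarrow> e \<in> (\<Union>i. (boot_step G (star k) ^^ i) A)"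
proof (induction rule: cl.induct)
  case (base e)
  then show ?case by (auto intro: exI[of _ 0])
next
  case (step e v S)
  have "S \<subseteq> (\<Union>i. (boot_step G (star k) ^^ i) A)" using step(7) by blast
  then have "\<exists>i. S \<subseteq> (boot_step G (star k) ^^ i) A"
    using finite_in_iter[of S G "star k" A] step(3) by simp
  then obtain i where i: "S \<subseteq> (boot_step G (star k) ^^ i) A"
    by (elim exE)
  obtain S' where S': "S' \<subseteq> S" "card S' = k" "finite S'"
    by (rule obtain_subset_with_card_n[OF step(4)])
  let ?E = "insert e S'"
  have ex: "\<exists>w. s = {v,w} \<and> w \<noteq> v \<and> w \<in> verts G" if "s \<in> ?E" for s
  proof -
    have sG: "s \<in> edges G" and vs: "v \<in> s" using that step(1,2,5) S'(1) by auto
    obtain x y where xy: "s = {x,y}" "x \<noteq> y" "x \<in> verts G" "y \<in> verts G"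
      using wf sG by meson
    show ?thesis
    proof (cases "v = x")
      case True then show ?thesis using xy by blast
    next
      case False then have "v = y" using xy(1) vs by blast
      then have "s = {v, x}" using xy(1) by (simp add: insert_commute)
      then show ?thesis using False xy(3) by blast
    qed
  qed
  define oth where "oth s = (SOME w. s = {v,w} \<and> w \<noteq> v \<and> w \<in> verts G)" for s
  have oth: "s = {v, oth s} \<and> oth s \<noteq> v \<and> oth s \<in> verts G" if "s \<in> ?E" for s
    unfolding oth_def using someI_ex[OF ex[OF that]] .
  have injo: "inj_on oth ?E"
  proof (rule inj_onI)
    fix x y assume "x \<in> ?E" "y \<in> ?E" "oth x = oth y"
    then have "x = {v, oth x}" "y = {v, oth y}" using oth by blast+
    then show "x = y" using \<open>oth x = oth y\<close> by simp
  qed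
  define W where "W = oth ` S'"
  have cW: "card W = k" unfolding W_def using injo S'(2)
    by (metis card_image inj_on_subset subset_insertI)
  have eW: "oth e \<notin> W" unfolding W_def
  proof
    assume "oth e \<in> oth ` S'"
    then obtain s where "s \<in> S'" "oth e = oth s" by blast
    then have "e = s" using injo by (auto dest: inj_onD)
    then show False using \<open>s \<in> S'\<close> step(6) S'(1) by blast
  qed
  have vW: "v \<notin> W" unfolding W_def using oth by auto
  have Wv: "W \<subseteq> verts G" unfolding W_def using oth by auto
  have "finite W" unfolding W_def using S'(3) by simp
  then obtain ws where ws: "set ws = W" "distinct ws" using finite_distinct_list by meson
  have lws: "length ws = k" using distinct_card[OF ws(2)] ws(1) cW by simp
  define L where "L = v # ws @ [oth e]"
  have oe: "oth e \<noteq> v" "oth e \<in> verts G" using oth[of e] by simp_all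
  have dL: "distinct L" unfolding L_def using ws eW vW oe by auto
  have lL: "length L = Suc (Suc k)" unfolding L_def using lws by simp
  have vG: "v \<in> verts G"
  proof -
    obtain x y where "e = {x,y}" "x \<in> verts G" "y \<in> verts G" using wf step(1) by meson
    then show ?thesis using step(2) by blast
  qed
  have sL: "set L \<subseteq> verts G" unfolding L_def using ws Wv vG oe by auto
  have Li: "L ! q \<in> insert (oth e) W" if "q \<in> {1..Suc k}" for q
  proof -
    define j where "j = q - 1"
    have j: "q = Suc j" "j \<le> k" using that unfolding j_def by auto
    have "L ! q = (ws @ [oth e]) ! j" unfolding L_def j by simp
    moreover have "j < length (ws @ [oth e])" using j lws by simp
    ultimately have "L ! q \<in> set (ws @ [oth e])" by (metis nth_mem)
    then show ?thesis using ws by simp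
  qed
  have L0: "L ! 0 = v" unfolding L_def by simp
  have Lk: "L ! Suc k = oth e" unfolding L_def using lws by (simp add: nth_append)
  define F where "F = (\<lambda>h. (nth L) ` h) ` edges (star k)"
  have F2: "F = (\<lambda>i. {v, L ! i}) ` {1..Suc k}"
    unfolding F_def star_edges image_image using L0 by simp
  have FE: "F \<subseteq> ?E"
  proof
    fix s assume "s \<in> F"
    then obtain j where j: "j \<in> {1..Suc k}" "s = {v, L ! j}" using F2 by auto
    from Li[OF j(1)] show "s \<in> ?E"
    proof
      assume "L ! j = oth e" then show ?thesis using j oth[of e] by auto
    next
      assume "L ! j \<in> W"
      then obtain s' where "s' \<in> S'" "L ! j = oth s'" unfolding W_def by auto
      then show ?thesis using j oth[of s'] by auto
    qed
  qed
  have "e = {v, L ! Suc k}" using Lk oth[of e] by simp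
  then have eF: "e \<in> F" unfolding F2 by (intro image_eqI[where x="Suc k"]) auto
  have FG: "F \<subseteq> edges G" using FE step(1,5) S'(1) by auto
  have Fc: "F \<in> copies G (star k)"
    unfolding copies_def
  proof (intro CollectI exI conjI)
    show "F = (\<lambda>h. (nth L) ` h) ` edges (star k)" by (rule F_def)
    show "inj_on (nth L) (verts (star k))" unfolding star_verts
      by (rule inj_on_nth[OF dL]) (simp add: lL)
    show "(nth L) ` verts (star k) \<subseteq> verts G" unfolding star_verts
    proof
      fix x assume "x \<in> (nth L) ` {0..Suc k}"
      then obtain q where q: "q \<le> Suc k" "x = L ! q" by auto
      then have "x \<in> set L" using lL by simp
      then show "x \<in> verts G" using sL by blast
    qed
    show "\<forall>h\<in>edges (star k). (nth L) ` h \<in> edges G"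
    proof
      fix h assume "h \<in> edges (star k)"
      then have "(nth L) ` h \<in> F" unfolding F_def by (rule imageI)
      then show "(nth L) ` h \<in> edges G" using FG by blast
    qed
  qed
  have "F - {e} \<subseteq> (boot_step G (star k) ^^ i) A" using FE S'(1) i by blast
  then have "e \<in> boot_step G (star k) ((boot_step G (star k) ^^ i) A)"
    unfolding boot_step_def using step(1) eF Fc by blast
  then show ?case by (auto intro!: exI[of _ "Suc i"])
qed

lemma iter_sub_edges: "A \<subseteq> edges G \<Longrightarrow> (boot_step G H ^^ i) A \<subseteq> edges G"
  by (induction i) (auto simp: boot_step_def)

lemma wsat_ex: "\<exists>B. B \<subseteq> edges G \<and> percolates G H B \<and> card B = wsat G H"
proof -
  have "percolates G H (edges G)" unfolding percolates_def
  proof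
    show "(\<Union>i. (boot_step G H ^^ i) (edges G)) \<subseteq> edges G"
      using iter_sub_edges[where A="edges G" and G=G and H=H] by blast
    show "edges G \<subseteq> (\<Union>i. (boot_step G H ^^ i) (edges G))"
    proof
      fix x assume "x \<in> edges G"
      then have "x \<in> (boot_step G H ^^ 0) (edges G)" by simp
      then show "x \<in> (\<Union>i. (boot_step G H ^^ i) (edges G))" by blast
    qed
  qed
  then have "\<exists>k B. B \<subseteq> edges G \<and> percolates G H B \<and> card B = k" by blast
  then show ?thesis unfolding wsat_def by (rule LeastI_ex)
qed

lemma wsat_le: "A \<subseteq> edges G \<Longrightarrow> percolates G H A \<Longrightarrow> wsat G H \<le> card A"
  unfolding wsat_def by (rule Least_le) blast

definition lay :: "nat \<Rightarrow> 'a set \<Rightarrow> ('a \<times> nat) set" where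
  "lay t e = (\<lambda>x. (x, t)) ` e"

lemma lay_inj: "lay t a = lay t b \<Longrightarrow> a = b"
proof -
  have "inj (\<lambda>x. (x, t))" by (auto simp: inj_on_def)
  then show "lay t a = lay t b \<Longrightarrow> a = b" unfolding lay_def by (metis inj_image_eq_iff)
qed

lemma lay_snd: "p \<in> lay t a \<Longrightarrow> snd p = t"
  unfolding lay_def by auto

lemma lay_pair: "lay t {x, y} = {(x, t), (y, t)}"
  unfolding lay_def by simp



theorem lemma3p5:
  fixes G :: "'a graph" and n r :: nat
  assumes "is_graph G" and "n \<ge> 1" and "r \<ge> 1"
    and "\<forall>v \<in> verts G. degree G v \<ge> r"
  shows "m_e (cart_prod G (complete_graph n)) (int r)
           \<le> (\<Sum>t = 0..n - 1. m_e G (int r - int t))"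
proof -
  note gr = assms(1) and deg = assms(4)
  define P where "P = cart_prod G (complete_graph n)"
  have edgesP: "edges P = {{(g, h1), (g, h2)} | g h1 h2. g \<in> verts G \<and> {h1, h2} \<in> edges (complete_graph n)} \<union>
     {{(g1, h), (g2, h)} | g1 g2 h. h \<in> verts (complete_graph n) \<and> {g1, g2} \<in> edges G}"
    unfolding P_def cart_prod_def edges_def verts_def snd_conv fst_conv by (rule refl)
  have vK: "verts (complete_graph n) = {0..<n}" unfolding complete_graph_def verts_def by simp
  have eK: "edges (complete_graph n) = {{i, j} | i j. i < n \<and> j < n \<and> i \<noteq> j}"
    unfolding complete_graph_def edges_def by simp
  have wfG: "\<forall>s\<in>edges G. \<exists>x y. s = {x,y} \<and> x \<noteq> y \<and> x \<in> verts G \<and> y \<in> verts G"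
    using gr unfolding is_graph_def by blast
  have finV: "finite (verts G)" using gr unfolding is_graph_def by (rule conjunct1)
  have finE: "finite (edges G)"
  proof (rule finite_subset)
    show "edges G \<subseteq> Pow (verts G)"
    proof
      fix s assume "s \<in> edges G"
      then obtain x y where "s = {x,y}" "x \<in> verts G" "y \<in> verts G" using wfG by meson
      then show "s \<in> Pow (verts G)" by simp
    qed
    show "finite (Pow (verts G))" using finV by simp
  qed
  have Kedge: "h1 < n \<and> h2 < n \<and> h1 \<noteq> h2" if hK: "{h1, h2} \<in> edges (complete_graph n)" for h1 h2
  proof -
    have "{h1, h2} \<in> {{i, j} | i j. i < n \<and> j < n \<and> i \<noteq> j}" using hK eK by simp
    then obtain i j where "{h1,h2} = {i,j}" "i < n" "j < n" "i \<noteq> j" by blast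
    then show ?thesis by (auto simp: doubleton_eq_iff)
  qed
  have Gedge: "g1 \<noteq> g2 \<and> g1 \<in> verts G \<and> g2 \<in> verts G" if gG: "{g1, g2} \<in> edges G" for g1 g2
  proof -
    obtain x y where "{g1,g2} = {x,y}" "x \<noteq> y" "x \<in> verts G" "y \<in> verts G"
      using gG wfG by meson
    then show ?thesis by (auto simp: doubleton_eq_iff)
  qed
  have wfP: "\<forall>s\<in>edges P. \<exists>x y. s = {x,y} \<and> x \<noteq> y \<and> x \<in> verts P \<and> y \<in> verts P"
  proof
    fix s assume "s \<in> edges P"
    then consider (a) g h1 h2 where "s = {(g, h1), (g, h2)}" "g \<in> verts G" "{h1, h2} \<in> edges (complete_graph n)"
      | (b) g1 g2 h where "s = {(g1, h), (g2, h)}" "h \<in> verts (complete_graph n)" "{g1, g2} \<in> edges G"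
      unfolding edgesP by blast
    then show "\<exists>x y. s = {x,y} \<and> x \<noteq> y \<and> x \<in> verts P \<and> y \<in> verts P"
    proof cases
      case a
      then show ?thesis using Kedge[OF a(3)] vK unfolding P_def cart_prod_def verts_def by auto
    next
      case b
      then show ?thesis using Gedge[OF b(3)] unfolding P_def cart_prod_def verts_def by auto
    qed
  qed
  have lay_edge: "lay t e \<in> edges P" if eG: "e \<in> edges G" "t < n" for e t
  proof -
    obtain x y where "e = {x,y}" using eG wfG by meson
    then have l: "lay t e = {(x,t),(y,t)}" by (simp add: lay_pair)
    have "{(x,t),(y,t)} \<in> {{(g1, h), (g2, h)} | g1 g2 h. h \<in> verts (complete_graph n) \<and> {g1, g2} \<in> edges G}"
      using eG vK \<open>e = {x,y}\<close> by auto
    then show ?thesis unfolding edgesP l by blast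
  qed
  have cross_edge: "{(v, i), (v, j)} \<in> edges P" if vij: "v \<in> verts G" "i < n" "j < n" "i \<noteq> j" for v i j
  proof -
    have "{i, j} \<in> edges (complete_graph n)" unfolding eK using vij by blast
    then have "{(v, i), (v, j)} \<in> {{(g, h1), (g, h2)} | g h1 h2. g \<in> verts G \<and> {h1, h2} \<in> edges (complete_graph n)}"
      using vij(1) by blast
    then show ?thesis unfolding edgesP by blast
  qed
  have vE: "v \<in> verts G" if ve: "v \<in> e" "e \<in> edges G" for v e
  proof -
    obtain x y where "e = {x,y}" "x \<in> verts G" "y \<in> verts G" using ve(2) wfG by meson
    then show ?thesis using ve(1) by blast
  qed

  have "\<exists>B. B \<subseteq> edges G \<and> edges G \<subseteq> cl G (r - t) B \<and> card B = m_e G (int r - int t)" for t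
  proof (cases "t < r")
    case True
    have me: "m_e G (int r - int t) = wsat G (star (r - t))"
      unfolding m_e_def using True by (simp add: nat_diff_distrib)
    obtain B where B: "B \<subseteq> edges G" "percolates G (star (r - t)) B" "card B = wsat G (star (r - t))"
      using wsat_ex by blast
    have "edges G = (\<Union>i. (boot_step G (star (r - t)) ^^ i) B)"
      using B(2) unfolding percolates_def by (rule sym)
    also have "\<dots> \<subseteq> cl G (r - t) B"
      by (intro UN_least iter_sub_cl)
    finally have ecl: "edges G \<subseteq> cl G (r - t) B" .
    have "B \<subseteq> edges G \<and> edges G \<subseteq> cl G (r - t) B \<and> card B = m_e G (int r - int t)"
      using B(1,3) me ecl by simp
    then show ?thesis by (rule exI)
  next
    case False
    have me: "m_e G (int r - int t) = 0" unfolding m_e_def using False by simp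
    have "edges G \<subseteq> cl G (r - t) {}"
    proof
      fix e assume e: "e \<in> edges G"
      then obtain x y where "e = {x,y}" using wfG by meson
      then have "x \<in> e" by simp
      show "e \<in> cl G (r - t) {}"
        by (rule cl.step[OF e \<open>x \<in> e\<close>, where S="{}"]) (use False in auto)
    qed
    then have "{} \<subseteq> edges G \<and> edges G \<subseteq> cl G (r - t) {} \<and> card {} = m_e G (int r - int t)"
      using me by simp
    then show ?thesis by (rule exI)
  qed
  then have "\<forall>t. \<exists>B. B \<subseteq> edges G \<and> edges G \<subseteq> cl G (r - t) B \<and> card B = m_e G (int r - int t)"
    by (rule allI)
  then have "\<exists>Bf. \<forall>t. Bf t \<subseteq> edges G \<and> edges G \<subseteq> cl G (r - t) (Bf t) \<and> card (Bf t) = m_e G (int r - int t)"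
    by (rule choice)
  then obtain Bf where Bf0: "\<forall>t. Bf t \<subseteq> edges G \<and> edges G \<subseteq> cl G (r - t) (Bf t) \<and> card (Bf t) = m_e G (int r - int t)"
    by (elim exE)
  have Bf: "\<And>t. Bf t \<subseteq> edges G" "\<And>t. edges G \<subseteq> cl G (r - t) (Bf t)"
    "\<And>t. card (Bf t) = m_e G (int r - int t)" using Bf0 by simp_all

  define A where "A = (\<Union>t\<in>{..<n}. lay t ` Bf t)"
  define C where "C = cl P r A"
  have AP: "A \<subseteq> edges P" unfolding A_def using Bf(1) lay_edge by blast

  have cross: "{(v, i), (v, j)} \<in> C"
    if L: "\<forall>e\<in>edges G. lay i e \<in> C" and ij: "i < n" "v \<in> verts G" "j < n" "j \<noteq> i" for i v j
  proof -
    define S where "S = lay i ` {s \<in> edges G. v \<in> s}"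
    have inj: "inj_on (lay i) X" for X by (meson inj_onI lay_inj)
    have cS: "card S = degree G v" unfolding S_def degree_def by (rule card_image[OF inj])
    have "e \<notin> S" if "e = {(v, i), (v, j)}" for e
    proof
      assume "e \<in> S"
      then obtain s where "e = lay i s" unfolding S_def by blast
      then have "(v, j) \<in> lay i s" using that by blast
      then show False using lay_snd ij by fastforce
    qed
    show ?thesis unfolding C_def
    proof (rule cl.step[where v="(v, i)" and S=S])
      show "{(v, i), (v, j)} \<in> edges P" using cross_edge ij by simp
      show "(v, i) \<in> {(v, i), (v, j)}" by simp
      show "\<forall>s\<in>S. s \<in> cl P r A" using L unfolding S_def C_def by blast
      show "finite S" unfolding S_def using finE by simp
      show "r \<le> card S" using cS deg ij by simp
      show "\<forall>s\<in>S. s \<in> edges P \<and> (v, i) \<in> s" unfolding S_def using lay_edge ij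
        by (auto simp: lay_def)
      show "{(v, i), (v, j)} \<notin> S" using \<open>\<And>e. e = {(v, i), (v, j)} \<Longrightarrow> e \<notin> S\<close> by blast
    qed
  qed

  have layer: "\<forall>e\<in>edges G. lay t e \<in> C" if "t < n" for t
    using that
  proof (induction t rule: less_induct)
    case (less t)
    have crs: "{(v, t), (v, i)} \<in> C" if "v \<in> verts G" "i < t" for v i
    proof -
      have "{(v, i), (v, t)} \<in> C"
        using cross[of i v t] less that by simp
      then show ?thesis by (simp add: insert_commute)
    qed
    define X where "X v = (\<lambda>i. {(v, t), (v, i)}) ` {..<t}" for v :: 'a
    have cX: "card (X v) = t" for v
    proof -
      have "inj_on (\<lambda>i. {(v, t), (v, i)}) {..<t}"
        by (rule inj_onI) (auto simp: doubleton_eq_iff)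
      then show ?thesis unfolding X_def by (simp add: card_image)
    qed
    have main: "lay t e \<in> C" if "e \<in> cl G (r - t) (Bf t)" for e
      using that
    proof (induction rule: cl.induct)
      case (base e)
      then show ?case unfolding C_def A_def using less.prems by (blast intro: cl.base)
    next
      case (step e v S)
      have vG: "v \<in> verts G" using vE step(1,2) by blast
      define S' where "S' = lay t ` S \<union> X v"
      have inj: "inj_on (lay t) Y" for Y by (meson inj_onI lay_inj)
      have disj: "lay t ` S \<inter> X v = {}"
      proof (rule ccontr)
        assume "lay t ` S \<inter> X v \<noteq> {}"
        then obtain s i where "i < t" "lay t s = {(v, t), (v, i)}" unfolding X_def by blast
        then have "(v, i) \<in> lay t s" by simp
        then show False using lay_snd \<open>i < t\<close> by fastforce
      qed
      have finX: "finite (X v)" unfolding X_def by simp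
      have "card S' = card S + t" unfolding S'_def
        using card_Un_disjoint[OF _ finX disj] step(3) card_image[OF inj] cX by simp
      then have cS': "r \<le> card S'" using step(4) by simp
      have notin: "lay t e \<notin> S'"
      proof
        assume "lay t e \<in> S'"
        then consider "lay t e \<in> lay t ` S" | "lay t e \<in> X v" unfolding S'_def by blast
        then show False
        proof cases
          case 1
          then obtain s where "s \<in> S" "lay t e = lay t s" by blast
          then show False using lay_inj step(6) by blast
        next
          case 2
          then obtain i where "i < t" "lay t e = {(v, t), (v, i)}" unfolding X_def by blast
          then have "(v, i) \<in> lay t e" by simp
          then show False using lay_snd \<open>i < t\<close> by fastforce
        qed
      qed
      show ?case unfolding C_def
      proof (rule cl.step[where v="(v, t)" and S=S'])
        show "lay t e \<in> edges P" using lay_edge step(1) less.prems by blast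
        show "(v, t) \<in> lay t e" using step(2) by (simp add: lay_def)
        show "\<forall>s\<in>S'. s \<in> cl P r A" unfolding S'_def X_def using step(7) crs vG
          unfolding C_def by blast
        show "finite S'" unfolding S'_def using step(3) finX by simp
        show "r \<le> card S'" by (rule cS')
        show "\<forall>s\<in>S'. s \<in> edges P \<and> (v, t) \<in> s"
        proof
          fix s assume "s \<in> S'"
          then consider s0 where "s0 \<in> S" "s = lay t s0" | i where "i < t" "s = {(v, t), (v, i)}"
            unfolding S'_def X_def by blast
          then show "s \<in> edges P \<and> (v, t) \<in> s"
          proof cases
            case 1
            then show ?thesis using step(5) lay_edge less.prems by (auto simp: lay_def)
          next
            case 2
            then show ?thesis using cross_edge[OF vG less.prems, of i] less.prems by auto
          qed
        qed
        show "lay t e \<notin> S'" by (rule notin)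
      qed
    qed
    show ?case using main Bf(2) by blast
  qed

  have EC: "edges P \<subseteq> C"
  proof
    fix s assume "s \<in> edges P"
    then consider (a) g h1 h2 where "s = {(g, h1), (g, h2)}" "g \<in> verts G" "{h1, h2} \<in> edges (complete_graph n)"
      | (b) g1 g2 h where "s = {(g1, h), (g2, h)}" "h \<in> verts (complete_graph n)" "{g1, g2} \<in> edges G"
      unfolding edgesP by blast
    then show "s \<in> C"
    proof cases
      case a
      have "h1 < n" "h2 < n" "h2 \<noteq> h1" using Kedge[OF a(3)] by auto
      then show ?thesis using cross[OF layer[OF \<open>h1 < n\<close>] \<open>h1 < n\<close> a(2) \<open>h2 < n\<close>] a(1) by simp
    next
      case b
      have "h < n" using b(2) vK by simp
      then have "lay h {g1, g2} \<in> C" using layer b(3) by blast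
      then show ?thesis using b(1) by (simp add: lay_pair)
    qed
  qed
  have perc: "percolates P (star r) A" unfolding percolates_def
  proof
    show "(\<Union>i. (boot_step P (star r) ^^ i) A) \<subseteq> edges P"
      using iter_sub_edges[where A=A and G=P and H="star r", OF AP] by blast
    show "edges P \<subseteq> (\<Union>i. (boot_step P (star r) ^^ i) A)"
      using EC cl_sub_iter[OF wfP, where k=r and A=A] unfolding C_def by blast
  qed
  have "m_e P (int r) = wsat P (star r)" unfolding m_e_def using assms(3) by simp
  also have "\<dots> \<le> card A" by (rule wsat_le[OF AP perc])
  also have "\<dots> \<le> (\<Sum>t<n. card (lay t ` Bf t))" unfolding A_def by (rule card_UN_le) simp
  also have "\<dots> \<le> (\<Sum>t<n. card (Bf t))" by (rule sum_mono) (rule card_image_le, rule finite_subset[OF Bf(1) finE])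
  also have "\<dots> = (\<Sum>t<n. m_e G (int r - int t))" using Bf(3) by simp
  also have "\<dots> = (\<Sum>t = 0..n - 1. m_e G (int r - int t))"
  proof -
    have "{..<n} = {0..n - 1}" using assms(2) by auto
    then show ?thesis by simp
  qed
  finally show ?thesis unfolding P_def .
qed

end
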